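(* Let $\mathcal{F}$ be a finite set of graphs, let $T\ge0$, and let $G,H$ be graphs on $n$ vertices. Then $$\big\|\phi^{(T)}_{\mathsf{WLOA},\mathcal{F}}(G)-\phi^{(T)}_{\mathsf{WLOA},\mathcal{F}}(H)\big\|\ge\big\|\phi^{(T)}_{\mathsf{WLOA}}(G)-\phi^{(T)}_{\mathsf{WLOA}}(H)\big\|.$$
   Context: Graphs are finite, simple, undirected, unlabeled. $1$-WL: $C^1_0$ constant, $C^1_t(v)=\mathsf{RELABEL}(C^1_{t-1}(v),\{\!\{C^1_{t-1}(u):u\in N(v)\}\!\})$ with a fixed injective $\mathsf{RELABEL}$ shared by all graphs. $1$-WL$_{\mathcal{F}}$: same update with initial colour $(\ell_F(v))_{F\in\mathcal{F}}$, $\ell_F(v)=1$ if $v$ lies in some vertex set $X$ with induced subgraph $G[X]$ isomorphic to $F$, else $0$. Let $\Sigma_t$ (resp. $\Sigma^{\mathcal{F}}_t$) be the colours occurring at round $t$ in $G$ or $H$, and $\phi_t(G)_c$ (resp. $\phi_{\mathcal{F},t}(G)_c$) the number of vertices of $G$ of colour $c$ at round $t$. $\phi^{(T)}_{\mathsf{WLOA}}(G)$ is the $0/1$ vector with one coordinate for each $(t,c,j)$, $t\in\{0,\dots,T\}$, $c\in\Sigma_t$, $j\in\{1,\dots,n\}$, equal to $1$ iff $\phi_t(G)_c\ge j$; $\phi^{(T)}_{\mathsf{WLOA},\mathcal{F}}$ is defined likewise from the $1$-WL$_{\mathcal{F}}$ counts. $\|\cdot\|$ is the Euclidean norm. *)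

theory Defs
  imports Complex_Main "HOL-Library.Multiset"
begin

type_synonym 'v graph = "'v set \<times> ('v \<times> 'v) set"

definition verts :: "'v graph \<Rightarrow> 'v set" where "verts G = fst G"
definition edges :: "'v graph \<Rightarrow> ('v \<times> 'v) set" where "edges G = snd G"

definition simple_graph :: "'v graph \<Rightarrow> bool" where
  "simple_graph G \<longleftrightarrow> finite (verts G) \<and> edges G \<subseteq> verts G \<times> verts G
     \<and> sym (edges G) \<and> irrefl (edges G)"

definition induced :: "'v graph \<Rightarrow> 'v set \<Rightarrow> 'v graph" where
  "induced G X = (X, edges G \<inter> (X \<times> X))"

definition graph_iso :: "'v graph \<Rightarrow> 'w graph \<Rightarrow> bool" where
  "graph_iso G F \<longleftrightarrow> (\<exists>f. bij_betw f (verts G) (verts F) \<and>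
     (\<forall>u\<in>verts G. \<forall>w\<in>verts G. (u, w) \<in> edges G \<longleftrightarrow> (f u, f w) \<in> edges F))"

definition ell :: "'v graph \<Rightarrow> 'w graph \<Rightarrow> 'v \<Rightarrow> bool" where
  "ell G F v \<longleftrightarrow> (\<exists>X \<subseteq> verts G. v \<in> X \<and> graph_iso (induced G X) F)"

text \<open>Initial colour of 1-WL_F: the vector (ell_F(v))_{F in FF}.\<close>
definition initF :: "'w graph set \<Rightarrow> 'v graph \<Rightarrow> 'v \<Rightarrow> ('w graph \<Rightarrow> bool)" where
  "initF FF G v = (\<lambda>F. F \<in> FF \<and> ell G F v)"

text \<open>Colours: the fixed injective RELABEL is realised by the constructor Step.\<close>
datatype 'a wlcol = Init 'a | Step "'a wlcol" "'a wlcol multiset"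

definition nbrs :: "'v graph \<Rightarrow> 'v \<Rightarrow> 'v set" where
  "nbrs G v = {u \<in> verts G. (v, u) \<in> edges G}"

primrec wl :: "'v graph \<Rightarrow> ('v \<Rightarrow> 'a) \<Rightarrow> nat \<Rightarrow> 'v \<Rightarrow> 'a wlcol" where
  "wl G c0 0 v = Init (c0 v)"
| "wl G c0 (Suc t) v = Step (wl G c0 t v) (image_mset (wl G c0 t) (mset_set (nbrs G v)))"

definition wl_count :: "'v graph \<Rightarrow> ('v \<Rightarrow> 'a) \<Rightarrow> nat \<Rightarrow> 'a wlcol \<Rightarrow> nat" where
  "wl_count G c0 t c = card {v \<in> verts G. wl G c0 t v = c}"

definition wloa_index ::
  "'v graph \<Rightarrow> 'v graph \<Rightarrow> ('v \<Rightarrow> 'a) \<Rightarrow> ('v \<Rightarrow> 'a) \<Rightarrow> nat \<Rightarrow> nat \<Rightarrow> (nat \<times> 'a wlcol \<times> nat) set" where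
  "wloa_index G H cG cH T n = {(t, c, j). t \<le> T \<and>
      c \<in> (wl G cG t ` verts G \<union> wl H cH t ` verts H) \<and> 1 \<le> j \<and> j \<le> n}"

definition wloa_vec :: "'v graph \<Rightarrow> ('v \<Rightarrow> 'a) \<Rightarrow> nat \<times> 'a wlcol \<times> nat \<Rightarrow> real" where
  "wloa_vec G c0 i = (case i of (t, c, j) \<Rightarrow> if wl_count G c0 t c \<ge> j then 1 else 0)"

definition wloa_dist ::
  "'v graph \<Rightarrow> 'v graph \<Rightarrow> ('v \<Rightarrow> 'a) \<Rightarrow> ('v \<Rightarrow> 'a) \<Rightarrow> nat \<Rightarrow> nat \<Rightarrow> real" where
  "wloa_dist G H cG cH T n =
     sqrt (\<Sum>i\<in>wloa_index G H cG cH T n. (wloa_vec G cG i - wloa_vec H cH i)\<^sup>2)"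

end

theory Submission
  imports Defs
begin

lemma wl_unit: "wl G (\<lambda>_. ()) t v = map_wlcol (\<lambda>_. ()) (wl G c0 t v)"
proof (induction t arbitrary: v)
  case 0 then show ?case by simp
next
  case (Suc t)
  have "wl G (\<lambda>_. ()) t = map_wlcol (\<lambda>_. ()) \<circ> wl G c0 t" using Suc by auto
  then show ?case by (simp add: multiset.map_comp)
qed

lemma jsum: "(\<Sum>j\<in>{1..n}. ((if a \<ge> j then 1 else 0) - (if b \<ge> j then 1 else (0::real)))\<^sup>2)
   = \<bar>real (min a n) - real (min b n)\<bar>"
proof (induction n)
  case 0 then show ?case by simp
next
  case (Suc n)
  have "{1..Suc n} = insert (Suc n) {1..n}" by auto
  then have "(\<Sum>j\<in>{1..Suc n}. ((if a \<ge> j then 1 else 0) - (if b \<ge> j then 1 else (0::real)))\<^sup>2)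
     = ((if a \<ge> Suc n then 1 else 0) - (if b \<ge> Suc n then 1 else (0::real)))\<^sup>2 + \<bar>real (min a n) - real (min b n)\<bar>"
    using Suc by simp
  then show ?case
    by (cases "Suc n \<le> a"; cases "Suc n \<le> b") (simp_all add: min_def)
qed

lemma index_eq: "wloa_index G H cG cH T n = Sigma {..T} (\<lambda>t. Sigma (wl G cG t ` verts G \<union> wl H cH t ` verts H) (\<lambda>_. {1..n}))"
  unfolding wloa_index_def by auto

lemma count_le: "finite (verts G) \<Longrightarrow> wl_count G c0 t c \<le> card (verts G)"
  unfolding wl_count_def by (intro card_mono) auto

lemma sum_Sigma3:
  assumes "finite A" "\<And>t. finite (S t)" "finite B"
  shows "(\<Sum>i\<in>Sigma A (\<lambda>t. S t \<times> B). f i) = (\<Sum>t\<in>A. \<Sum>c\<in>S t. \<Sum>j\<in>B. f (t,c,j))"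
proof -
  have "(\<Sum>t\<in>A. \<Sum>c\<in>S t. \<Sum>j\<in>B. f (t,c,j)) = (\<Sum>t\<in>A. \<Sum>p\<in>S t \<times> B. f (t,p))"
    using assms by (intro sum.cong refl) (simp add: sum.cartesian_product)
  also have "\<dots> = (\<Sum>i\<in>Sigma A (\<lambda>t. S t \<times> B). f i)"
    using assms by (subst sum.Sigma) (auto simp: split_def)
  finally show ?thesis by simp
qed

lemma dist_sq:
  assumes "finite (verts G)" "finite (verts H)" "card (verts G) = n" "card (verts H) = n"
  shows "(\<Sum>i\<in>wloa_index G H cG cH T n. (wloa_vec G cG i - wloa_vec H cH i)\<^sup>2)
    = (\<Sum>t\<le>T. \<Sum>c\<in>wl G cG t ` verts G \<union> wl H cH t ` verts H.
          \<bar>real (wl_count G cG t c) - real (wl_count H cH t c)\<bar>)"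
proof -
  have "(\<Sum>i\<in>wloa_index G H cG cH T n. (wloa_vec G cG i - wloa_vec H cH i)\<^sup>2)
    = (\<Sum>t\<le>T. \<Sum>c\<in>wl G cG t ` verts G \<union> wl H cH t ` verts H. \<Sum>j\<in>{1..n}.
        ((if wl_count G cG t c \<ge> j then 1 else 0) - (if wl_count H cH t c \<ge> j then 1 else (0::real)))\<^sup>2)"
    unfolding index_eq wloa_vec_def
    by (subst sum_Sigma3) (simp_all add: assms)
  also have "\<dots> = (\<Sum>t\<le>T. \<Sum>c\<in>wl G cG t ` verts G \<union> wl H cH t ` verts H.
          \<bar>real (wl_count G cG t c) - real (wl_count H cH t c)\<bar>)"
  proof (intro sum.cong refl)
    fix t c
    have a: "wl_count G cG t c \<le> n" using count_le[OF assms(1)] assms(3) by metis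
    have b: "wl_count H cH t c \<le> n" using count_le[OF assms(2)] assms(4) by metis
    show "(\<Sum>j\<in>{1..n}.
        ((if wl_count G cG t c \<ge> j then 1 else 0) - (if wl_count H cH t c \<ge> j then 1 else (0::real)))\<^sup>2)
      = \<bar>real (wl_count G cG t c) - real (wl_count H cH t c)\<bar>"
      unfolding jsum using a b by (simp add: min_absorb1)
  qed
  finally show ?thesis .
qed

lemma abs_group:
  fixes a b :: "'c \<Rightarrow> real"
  assumes "finite S"
  shows "(\<Sum>c\<in>p`S. \<bar>(\<Sum>c'\<in>{c'\<in>S. p c' = c}. a c') - (\<Sum>c'\<in>{c'\<in>S. p c' = c}. b c')\<bar>)
    \<le> (\<Sum>c'\<in>S. \<bar>a c' - b c'\<bar>)"
proof -
  have "(\<Sum>c\<in>p`S. \<bar>(\<Sum>c'\<in>{c'\<in>S. p c' = c}. a c') - (\<Sum>c'\<in>{c'\<in>S. p c' = c}. b c')\<bar>)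
     \<le> (\<Sum>c\<in>p`S. \<Sum>c'\<in>{c'\<in>S. p c' = c}. \<bar>a c' - b c'\<bar>)"
  proof (rule sum_mono)
    fix c
    have "(\<Sum>c'\<in>{c'\<in>S. p c' = c}. a c') - (\<Sum>c'\<in>{c'\<in>S. p c' = c}. b c')
       = (\<Sum>c'\<in>{c'\<in>S. p c' = c}. a c' - b c')" by (rule sum_subtractf[symmetric])
    then show "\<bar>(\<Sum>c'\<in>{c'\<in>S. p c' = c}. a c') - (\<Sum>c'\<in>{c'\<in>S. p c' = c}. b c')\<bar>
       \<le> (\<Sum>c'\<in>{c'\<in>S. p c' = c}. \<bar>a c' - b c'\<bar>)" using sum_abs by simp
  qed
  also have "\<dots> = (\<Sum>c'\<in>S. \<bar>a c' - b c'\<bar>)"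
    using assms by (rule sum.image_gen[symmetric])
  finally show ?thesis .
qed

lemma count_proj:
  assumes "finite (verts G)" "wl G c0 t ` verts G \<subseteq> S" "finite S"
  shows "wl_count G (\<lambda>_. ()) t c
     = (\<Sum>c'\<in>{c'\<in>S. map_wlcol (\<lambda>_. ()) c' = c}. wl_count G c0 t c')"
proof -
  have "{v\<in>verts G. wl G (\<lambda>_. ()) t v = c}
     = (\<Union>c'\<in>{c'\<in>S. map_wlcol (\<lambda>_. ()) c' = c}. {v\<in>verts G. wl G c0 t v = c'})"
  proof (intro equalityI subsetI)
    fix v assume v: "v \<in> {v\<in>verts G. wl G (\<lambda>_. ()) t v = c}"
    have 1: "wl G c0 t v \<in> S" using assms(2) v by blast
    have 2: "map_wlcol (\<lambda>_. ()) (wl G c0 t v) = c" using v wl_unit[of G t v c0] by simp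
    show "v \<in> (\<Union>c'\<in>{c'\<in>S. map_wlcol (\<lambda>_. ()) c' = c}. {v\<in>verts G. wl G c0 t v = c'})"
      using 1 2 v by blast
  next
    fix v assume "v \<in> (\<Union>c'\<in>{c'\<in>S. map_wlcol (\<lambda>_. ()) c' = c}. {v\<in>verts G. wl G c0 t v = c'})"
    then obtain c' where "c' \<in> S" "map_wlcol (\<lambda>_. ()) c' = c" "v \<in> verts G" "wl G c0 t v = c'"
      by blast
    then show "v \<in> {v\<in>verts G. wl G (\<lambda>_. ()) t v = c}"
      using wl_unit[of G t v c0] by simp
  qed
  moreover have "card (\<Union>c'\<in>{c'\<in>S. map_wlcol (\<lambda>_. ()) c' = c}. {v\<in>verts G. wl G c0 t v = c'})
     = (\<Sum>c'\<in>{c'\<in>S. map_wlcol (\<lambda>_. ()) c' = c}. card {v\<in>verts G. wl G c0 t v = c'})"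
  proof (rule card_UN_disjoint)
    show "finite {c'\<in>S. map_wlcol (\<lambda>_. ()) c' = c}" using assms(3) by simp
    show "\<forall>i\<in>{c'\<in>S. map_wlcol (\<lambda>_. ()) c' = c}. finite {v\<in>verts G. wl G c0 t v = i}"
      using assms(1) by simp
    show "\<forall>i\<in>{c'\<in>S. map_wlcol (\<lambda>_. ()) c' = c}. \<forall>j\<in>{c'\<in>S. map_wlcol (\<lambda>_. ()) c' = c}. i \<noteq> j \<longrightarrow>
        {v\<in>verts G. wl G c0 t v = i} \<inter> {v\<in>verts G. wl G c0 t v = j} = {}"
      by blast
  qed
  ultimately show ?thesis unfolding wl_count_def by simp
qed

lemma per_t:
  fixes cG cH :: "'v \<Rightarrow> 'c"
  assumes "finite (verts G)" "finite (verts H)"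
  shows "(\<Sum>c\<in>wl G (\<lambda>_. ()) t ` verts G \<union> wl H (\<lambda>_. ()) t ` verts H.
          \<bar>real (wl_count G (\<lambda>_. ()) t c) - real (wl_count H (\<lambda>_. ()) t c)\<bar>)
    \<le> (\<Sum>c\<in>wl G cG t ` verts G \<union> wl H cH t ` verts H.
          \<bar>real (wl_count G cG t c) - real (wl_count H cH t c)\<bar>)"
proof -
  define S where "S = wl G cG t ` verts G \<union> wl H cH t ` verts H"
  define p :: "'c wlcol \<Rightarrow> unit wlcol" where "p = map_wlcol (\<lambda>_. ())"
  have fS: "finite S" unfolding S_def using assms by simp
  have P: "wl G (\<lambda>_. ()) t ` verts G \<union> wl H (\<lambda>_. ()) t ` verts H = p ` S"
    unfolding S_def p_def image_Un image_image
    using wl_unit[of G t _ cG] wl_unit[of H t _ cH] by simp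
  have cG: "wl_count G (\<lambda>_. ()) t c = (\<Sum>c'\<in>{c'\<in>S. p c' = c}. wl_count G cG t c')" for c
    unfolding p_def by (rule count_proj) (use assms fS in \<open>auto simp: S_def\<close>)
  have cH: "wl_count H (\<lambda>_. ()) t c = (\<Sum>c'\<in>{c'\<in>S. p c' = c}. wl_count H cH t c')" for c
    unfolding p_def by (rule count_proj) (use assms fS in \<open>auto simp: S_def\<close>)
  show ?thesis
    unfolding P cG cH of_nat_sum
    using abs_group[OF fS, where p=p and a="\<lambda>c. real (wl_count G cG t c)" and b="\<lambda>c. real (wl_count H cH t c)"]
    unfolding S_def by simp
qed

theorem proposition16:
  fixes FF :: "'w graph set" and G H :: "'v graph" and T n :: nat
  assumes "finite FF" and "\<forall>F\<in>FF. simple_graph F"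
    and "simple_graph G" and "simple_graph H"
    and "card (verts G) = n" and "card (verts H) = n"
  shows "wloa_dist G H (initF FF G) (initF FF H) T n
           \<ge> wloa_dist G H (\<lambda>_. ()) (\<lambda>_. ()) T n"
proof -
  have fG: "finite (verts G)" and fH: "finite (verts H)"
    using assms(3,4) unfolding simple_graph_def by auto
  show ?thesis
    unfolding wloa_dist_def dist_sq[OF fG fH assms(5,6)]
    by (intro real_sqrt_le_mono sum_mono per_t fG fH)
qed

end
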